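(* There is an absolute constant $c>0$ such that for all integers $N,M$ for which $C_{N,M}$ is defined, there is a 2D SLP of size at most $c\cdot(\log N+\log M)$ deriving $C_{N,M}$.
   Context: Alphabet $\Sigma\supseteq\{0,1,\$\}$; logarithms are base 2. For $N=2^n$, $\mathsf{Bin}_N$ is the $N\times(n+2)$ array whose $i$-th row is $\$\,b_{i-1}\,\$$ with $b_{i-1}$ the $n$-bit binary representation of $i-1$; $\mathsf{ShiftBin}_N$ is the $2N\times N(n+2)$ array in which, for each $j\in[1..N]$, rows $j..j+N-1$ and columns $(j-1)(n+2)+1..j(n+2)$ form a copy of $\mathsf{Bin}_N$, all other entries being $0$. For integers $N\ge1$, $M\ge4$, let $M'=2^{n}$ be the largest power of two with $M'(\log M'+2)\le M/2$, assume $N\ge M'$, and let $B=\mathsf{ShiftBin}_{M'}$ (of size $2M'\times M'(\log M'+2)$). The 2D string $C_{N,M}$ of size $N\times M$ is the horizontal concatenation of three parts: (1) the left block, of width $M'(\log M'+2)$: $\lfloor N/(2M')\rfloor$ copies of $B$ stacked vertically, followed below by rows of $0$'s to reach height $N$; (2) the right block, of the same width: $M'$ rows of $0$'s, then $\lfloor (N-M')/(2M')\rfloor$ copies of $B$ stacked vertically, then rows of $0$'s to reach height $N$; (3) an all-$0$ block completing the width to $M$. A 2D SLP is a triple $(\mathcal V,\mathcal S,\rho)$ of nonterminals with dimensions, a start, and productions each being a character, a horizontal concatenation of two nonterminals of equal height, or a vertical concatenation of two nonterminals of equal width, with acyclic occurrence relation; it derives the recursive expansion of $\mathcal S$. Its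 size is the total number of symbols on all right-hand sides. *)

theory Defs
  imports Complex_Main
begin

text \<open>Symbols used by C_{N,M}: 0, 1 and the separator dollar.  A 2D string is a
  rectangular list of rows (row-major); all 2D strings produced below are rectangular.\<close>

datatype sym = Zero | One | Dollar

type_synonym str2d = "sym list list"

text \<open>Nonterminals are the indices 0..length G - 1 of the production list G.  Acyclicity of the occurrence
  relation is enforced by requiring that production i only refers to nonterminals j < i
  (any acyclic grammar can be topologically ordered this way).\<close>

datatype prod = Term sym | HCat nat nat | VCat nat nat

definition hcat :: "str2d \<Rightarrow> str2d \<Rightarrow> str2d option" where
  "hcat A B = (if length A = length B then Some (map2 (@) A B) else None)"

definition vcat :: "str2d \<Rightarrow> str2d \<Rightarrow> str2d option" where
  "vcat A B = (if length (hd A) = length (hd B) then Some (A @ B) else None)"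

function slp_eval :: "prod list \<Rightarrow> nat \<Rightarrow> str2d option" where
  "slp_eval G i =
     (if i < length G then
        (case G ! i of
           Term a \<Rightarrow> Some [[a]]
         | HCat j k \<Rightarrow>
             (if j < i \<and> k < i then
                (case slp_eval G j of None \<Rightarrow> None
                 | Some A \<Rightarrow> (case slp_eval G k of None \<Rightarrow> None | Some B \<Rightarrow> hcat A B))
              else None)
         | VCat j k \<Rightarrow>
             (if j < i \<and> k < i then
                (case slp_eval G j of None \<Rightarrow> None
                 | Some A \<Rightarrow> (case slp_eval G k of None \<Rightarrow> None | Some B \<Rightarrow> vcat A B))
              else None))
      else None)"
  by pat_completeness auto
termination by (relation "measure (\<lambda>(G, i). i)") auto

fun prod_size :: "prod \<Rightarrow> nat" where
  "prod_size (Term _) = 1"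
| "prod_size (HCat _ _) = 2"
| "prod_size (VCat _ _) = 2"

definition slp_size :: "prod list \<Rightarrow> nat" where
  "slp_size G = (\<Sum>p\<leftarrow>G. prod_size p)"

definition slp_derives :: "prod list \<Rightarrow> nat \<Rightarrow> str2d \<Rightarrow> bool" where
  "slp_derives G s S \<longleftrightarrow> s < length G \<and> slp_eval G s = Some S"

text \<open>M' = 2^(Mexp M) is the largest power of two with M'(log M' + 2) \<le> M/2,
  i.e. 2 * 2^n * (n + 2) \<le> M.\<close>
definition Mexp :: "nat \<Rightarrow> nat" where
  "Mexp M = (GREATEST n. 2 * 2 ^ n * (n + 2) \<le> M)"

definition Mpow :: "nat \<Rightarrow> nat" where
  "Mpow M = 2 ^ Mexp M"

text \<open>Entry (i,q) (0-indexed) of Bin_{2^n}: row i is dollar, the n-bit binary representation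
  of i (most significant bit first), dollar.\<close>
definition bin_entry :: "nat \<Rightarrow> nat \<Rightarrow> nat \<Rightarrow> sym" where
  "bin_entry n i q =
     (if q = 0 \<or> q = n + 1 then Dollar
      else if (i div 2 ^ (n - q)) mod 2 = 1 then One else Zero)"

text \<open>Entry (r,c) (0-indexed) of ShiftBin_{2^n} (size 2*2^n x 2^n*(n+2)): block j (0-indexed)
  occupies columns j(n+2)..(j+1)(n+2)-1 and rows j..j+2^n-1.\<close>
definition shiftbin_entry :: "nat \<Rightarrow> nat \<Rightarrow> nat \<Rightarrow> sym" where
  "shiftbin_entry n r c =
     (let w = n + 2; j = c div w; q = c mod w in
      if j \<le> r \<and> r < j + 2 ^ n then bin_entry n (r - j) q else Zero)"

definition C_entry :: "nat \<Rightarrow> nat \<Rightarrow> nat \<Rightarrow> nat \<Rightarrow> sym" where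
  "C_entry N M r c =
     (let n = Mexp M; m = 2 ^ n; W = m * (n + 2) in
      if c < W then
        (if r < (N div (2 * m)) * (2 * m) then shiftbin_entry n (r mod (2 * m)) c else Zero)
      else if c < 2 * W then
        (if m \<le> r \<and> r < m + ((N - m) div (2 * m)) * (2 * m)
         then shiftbin_entry n ((r - m) mod (2 * m)) (c - W) else Zero)
      else Zero)"

definition C_str :: "nat \<Rightarrow> nat \<Rightarrow> str2d" where
  "C_str N M = map (\<lambda>r. map (\<lambda>c. C_entry N M r c) [0..<M]) [0..<N]"

definition C_defined :: "nat \<Rightarrow> nat \<Rightarrow> bool" where
  "C_defined N M \<longleftrightarrow> 1 \<le> N \<and> 4 \<le> M \<and> Mpow M \<le> N"

end

theory Submission
  imports Defs "HOL-Library.Log_Nat"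
begin

declare slp_eval.simps[simp del]

lemma eval_append: "i < length G \<Longrightarrow> slp_eval (G @ H) i = slp_eval G i"
proof (induction i rule: less_induct)
  case (less i)
  have IH: "\<And>j. j < i \<Longrightarrow> slp_eval (G @ H) j = slp_eval G j"
    using less by simp
  show ?case
    apply (subst (1 2) slp_eval.simps)
    using less.prems by (auto simp: nth_append IH split: prod.split option.split)
qed

lemma eval_snocH: "i < length G \<Longrightarrow> j < length G \<Longrightarrow>
  slp_eval (G @ [HCat i j]) (length G) =
   (case slp_eval G i of None \<Rightarrow> None | Some A \<Rightarrow> (case slp_eval G j of None \<Rightarrow> None | Some B \<Rightarrow> hcat A B))"
proof -
  assume a: "i < length G" "j < length G"
  have e: "slp_eval (G @ [HCat i j]) j = slp_eval G j" "slp_eval (G @ [HCat i j]) i = slp_eval G i"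
    using a by (simp_all add: eval_append)
  show ?thesis apply (subst slp_eval.simps) apply (simp add: a) apply (subst e(1), subst e(2)) apply (rule refl) done
qed

lemma eval_snocV: "i < length G \<Longrightarrow> j < length G \<Longrightarrow>
  slp_eval (G @ [VCat i j]) (length G) =
   (case slp_eval G i of None \<Rightarrow> None | Some A \<Rightarrow> (case slp_eval G j of None \<Rightarrow> None | Some B \<Rightarrow> vcat A B))"
proof -
  assume a: "i < length G" "j < length G"
  have e: "slp_eval (G @ [VCat i j]) j = slp_eval G j" "slp_eval (G @ [VCat i j]) i = slp_eval G i"
    using a by (simp_all add: eval_append)
  show ?thesis apply (subst slp_eval.simps) apply (simp add: a) apply (subst e(1), subst e(2)) apply (rule refl) done
qed

lemma eval_snocT: "slp_eval (G @ [Term s]) (length G) = Some [[s]]"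
  by (subst slp_eval.simps) simp

lemma size_append: "slp_size (G @ H) = slp_size G + slp_size H"
  by (simp add: slp_size_def)

definition mk :: "nat \<Rightarrow> nat \<Rightarrow> (nat \<Rightarrow> nat \<Rightarrow> sym) \<Rightarrow> str2d" where
  "mk h w f = map (\<lambda>r. map (\<lambda>c. f r c) [0..<w]) [0..<h]"

lemma mk_eqI: "length A = h \<Longrightarrow> (\<forall>r<h. length (A!r) = w) \<Longrightarrow> (\<forall>r<h. \<forall>c<w. A!r!c = f r c) \<Longrightarrow> A = mk h w f"
  unfolding mk_def by (auto intro!: nth_equalityI)

lemma mk_len[simp]: "length (mk h w f) = h" by (simp add: mk_def)
lemma mk_nth_len: "r < h \<Longrightarrow> length (mk h w f ! r) = w" by (simp add: mk_def)
lemma mk_nth: "r < h \<Longrightarrow> c < w \<Longrightarrow> mk h w f ! r ! c = f r c" by (simp add: mk_def)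

lemma mk_cong: "(\<And>r c. r < h \<Longrightarrow> c < w \<Longrightarrow> f r c = g r c) \<Longrightarrow> mk h w f = mk h w g"
  unfolding mk_def by auto

definition hj :: "nat \<Rightarrow> (nat \<Rightarrow> nat \<Rightarrow> sym) \<Rightarrow> (nat \<Rightarrow> nat \<Rightarrow> sym) \<Rightarrow> nat \<Rightarrow> nat \<Rightarrow> sym" where
  "hj w1 f g = (\<lambda>r c. if c < w1 then f r c else g r (c - w1))"
definition vj :: "nat \<Rightarrow> (nat \<Rightarrow> nat \<Rightarrow> sym) \<Rightarrow> (nat \<Rightarrow> nat \<Rightarrow> sym) \<Rightarrow> nat \<Rightarrow> nat \<Rightarrow> sym" where
  "vj h1 f g = (\<lambda>r c. if r < h1 then f r c else g (r - h1) c)"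

lemma hcat_mk: "hcat (mk h w1 f) (mk h w2 g) = Some (mk h (w1 + w2) (hj w1 f g))"
proof -
  have "map2 (@) (mk h w1 f) (mk h w2 g) = mk h (w1 + w2) (hj w1 f g)"
    by (rule mk_eqI) (auto simp: mk_nth_len mk_nth nth_append hj_def)
  then show ?thesis by (simp add: hcat_def)
qed

lemma vcat_mk: "0 < h1 \<Longrightarrow> 0 < h2 \<Longrightarrow> vcat (mk h1 w f) (mk h2 w g) = Some (mk (h1 + h2) w (vj h1 f g))"
proof -
  assume a: "0 < h1" "0 < h2"
  have "mk h1 w f @ mk h2 w g = mk (h1 + h2) w (vj h1 f g)"
    by (rule mk_eqI) (auto simp: mk_nth_len mk_nth nth_append vj_def)
  moreover have "length (hd (mk h1 w f)) = w" "length (hd (mk h2 w g)) = w"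
    using a unfolding mk_def by (simp_all add: hd_map)
  ultimately show ?thesis by (simp add: vcat_def)
qed

definition avail :: "prod list \<Rightarrow> nat \<Rightarrow> nat \<Rightarrow> (nat \<Rightarrow> nat \<Rightarrow> sym) \<Rightarrow> bool" where
  "avail G h w f \<longleftrightarrow> h = 0 \<or> w = 0 \<or> (\<exists>i<length G. slp_eval G i = Some (mk h w f))"

definition ext :: "prod list \<Rightarrow> prod list \<Rightarrow> bool" where
  "ext G G' \<longleftrightarrow> (\<exists>H. G' = G @ H)"

lemma ext_refl[simp]: "ext G G" unfolding ext_def by auto
lemma ext_trans: "ext G1 G2 \<Longrightarrow> ext G2 G3 \<Longrightarrow> ext G1 G3" unfolding ext_def by auto

lemma avail_mono: "avail G h w f \<Longrightarrow> ext G G' \<Longrightarrow> avail G' h w f"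
  unfolding avail_def ext_def by (auto simp: eval_append) (metis eval_append length_append trans_less_add1)

lemma avail_eqI: "avail G h w f \<Longrightarrow> h = h' \<Longrightarrow> w = w' \<Longrightarrow> (\<And>r c. r < h \<Longrightarrow> c < w \<Longrightarrow> f r c = g r c) \<Longrightarrow> avail G h' w' g"
  unfolding avail_def using mk_cong by metis

lemma avail_term: "\<exists>G'. ext G G' \<and> slp_size G' \<le> slp_size G + 1 \<and> avail G' 1 1 (\<lambda>_ _. s)"
proof -
  have "mk 1 1 (\<lambda>_ _. s) = [[s]]" by (simp add: mk_def)
  then show ?thesis
    by (intro exI[of _ "G @ [Term s]"]) (auto simp: ext_def size_append slp_size_def avail_def eval_snocT)
qed

lemma avail_hjoin:
  assumes "avail G h w1 f" "avail G h w2 g"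
  shows "\<exists>G'. ext G G' \<and> slp_size G' \<le> slp_size G + 2 \<and> avail G' h (w1 + w2) (hj w1 f g)"
proof (cases "h = 0 \<or> w1 = 0 \<or> w2 = 0")
  case True
  then show ?thesis
  proof (elim disjE)
    assume "h = 0" then show ?thesis by (intro exI[of _ G]) (auto simp: avail_def)
  next
    assume "w1 = 0" then show ?thesis
      by (intro exI[of _ G]) (auto intro: avail_eqI[OF assms(2)] simp: hj_def)
  next
    assume "w2 = 0" then show ?thesis
      by (intro exI[of _ G]) (auto intro: avail_eqI[OF assms(1)] simp: hj_def)
  qed
next
  case False
  then obtain i j where ij: "i < length G" "slp_eval G i = Some (mk h w1 f)"
    "j < length G" "slp_eval G j = Some (mk h w2 g)"
    using assms unfolding avail_def by blast
  show ?thesis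
    by (intro exI[of _ "G @ [HCat i j]"])
      (auto simp: ext_def size_append slp_size_def avail_def eval_snocH ij hcat_mk intro!: exI[of _ "length G"])
qed

lemma avail_vjoin:
  assumes "avail G h1 w f" "avail G h2 w g"
  shows "\<exists>G'. ext G G' \<and> slp_size G' \<le> slp_size G + 2 \<and> avail G' (h1 + h2) w (vj h1 f g)"
proof (cases "w = 0 \<or> h1 = 0 \<or> h2 = 0")
  case True
  then show ?thesis
  proof (elim disjE)
    assume "w = 0" then show ?thesis by (intro exI[of _ G]) (auto simp: avail_def)
  next
    assume "h1 = 0" then show ?thesis
      by (intro exI[of _ G]) (auto intro: avail_eqI[OF assms(2)] simp: vj_def)
  next
    assume "h2 = 0" then show ?thesis
      by (intro exI[of _ G]) (auto intro: avail_eqI[OF assms(1)] simp: vj_def)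
  qed
next
  case False
  then obtain i j where ij: "i < length G" "slp_eval G i = Some (mk h1 w f)"
    "j < length G" "slp_eval G j = Some (mk h2 w g)"
    using assms unfolding avail_def by blast
  show ?thesis
    using False
    by (intro exI[of _ "G @ [VCat i j]"])
      (auto simp: ext_def size_append slp_size_def avail_def eval_snocV ij vcat_mk intro!: exI[of _ "length G"])
qed



lemma mod_sub_mult: "p * h \<le> r \<Longrightarrow> (r - p * h) mod (h::nat) = r mod h"
proof -
  assume "p * h \<le> r"
  then obtain s where "r = s + p * h" by (metis le_add_diff_inverse2)
  then show ?thesis by simp
qed

lemma avail_vrep:
  assumes A: "avail G h w f"
  shows "q < 2 ^ k \<Longrightarrow> \<exists>G'. ext G G' \<and> slp_size G' \<le> slp_size G + 4 * k \<and>
           avail G' (q * h) w (\<lambda>r c. f (r mod h) c)"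
proof (induction k arbitrary: q)
  case 0
  then show ?case by (intro exI[of _ G]) (auto simp: avail_def)
next
  case (Suc k)
  show ?case
  proof (cases "q \<le> 1")
    case True
    then consider "q = 0" | "q = 1" by linarith
    then show ?thesis
    proof cases
      case 1 then show ?thesis by (intro exI[of _ G]) (auto simp: avail_def)
    next
      case 2 then show ?thesis by (intro exI[of _ G]) (auto intro: avail_eqI[OF A])
    qed
  next
    case False
    define p where "p = q div 2"
    have pk: "p < 2 ^ k" using Suc.prems by (simp add: p_def)
    from Suc.IH[OF pk] obtain G1 where G1: "ext G G1" "slp_size G1 \<le> slp_size G + 4 * k"
      "avail G1 (p * h) w (\<lambda>r c. f (r mod h) c)" by blast
    from avail_vjoin[OF G1(3) G1(3)] obtain G2 where G2: "ext G1 G2" "slp_size G2 \<le> slp_size G1 + 2"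
      "avail G2 (p * h + p * h) w (vj (p * h) (\<lambda>r c. f (r mod h) c) (\<lambda>r c. f (r mod h) c))" by blast
    have A2: "avail G2 ((2 * p) * h) w (\<lambda>r c. f (r mod h) c)"
      by (rule avail_eqI[OF G2(3)]) (auto simp: vj_def mod_sub_mult)
    show ?thesis
    proof (cases "even q")
      case True
      then have "q = 2 * p" by (simp add: p_def)
      then show ?thesis using A2 G1 G2 ext_trans by (intro exI[of _ G2]) auto
    next
      case odd: False
      then have q: "q = 2 * p + 1" by (simp add: p_def)
      have A1: "avail G2 h w f" using avail_mono[OF A] G1 G2 ext_trans by blast
      from avail_vjoin[OF A2 A1] obtain G3 where G3: "ext G2 G3" "slp_size G3 \<le> slp_size G2 + 2"
        "avail G3 (2 * p * h + h) w (vj (2 * p * h) (\<lambda>r c. f (r mod h) c) f)" by blast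
      have "avail G3 (q * h) w (\<lambda>r c. f (r mod h) c)"
      proof (rule avail_eqI[OF G3(3)])
        show "2 * p * h + h = q * h" using q by simp
        fix r c assume r: "r < 2 * p * h + h"
        show "vj (2 * p * h) (\<lambda>r c. f (r mod h) c) f r c = f (r mod h) c"
        proof (cases "r < 2 * p * h")
          case False
          then have "(r - 2 * p * h) mod h = r mod h" using mod_sub_mult[of "2*p" h r] by simp
          moreover have "(r - 2 * p * h) mod h = r - 2 * p * h" using r False by simp
          ultimately show ?thesis using False by (simp add: vj_def)
        qed (simp add: vj_def)
      qed simp
      then show ?thesis using G1 G2 G3 ext_trans by (intro exI[of _ G3]) auto
    qed
  qed
qed

lemma avail_hrep:
  assumes A: "avail G h w f"
  shows "q < 2 ^ k \<Longrightarrow> \<exists>G'. ext G G' \<and> slp_size G' \<le> slp_size G + 4 * k \<and>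
           avail G' h (q * w) (\<lambda>r c. f r (c mod w))"
proof (induction k arbitrary: q)
  case 0
  then show ?case by (intro exI[of _ G]) (auto simp: avail_def)
next
  case (Suc k)
  show ?case
  proof (cases "q \<le> 1")
    case True
    then consider "q = 0" | "q = 1" by linarith
    then show ?thesis
    proof cases
      case 1 then show ?thesis by (intro exI[of _ G]) (auto simp: avail_def)
    next
      case 2 then show ?thesis by (intro exI[of _ G]) (auto intro: avail_eqI[OF A])
    qed
  next
    case False
    define p where "p = q div 2"
    have pk: "p < 2 ^ k" using Suc.prems by (simp add: p_def)
    from Suc.IH[OF pk] obtain G1 where G1: "ext G G1" "slp_size G1 \<le> slp_size G + 4 * k"
      "avail G1 h (p * w) (\<lambda>r c. f r (c mod w))" by blast
    from avail_hjoin[OF G1(3) G1(3)] obtain G2 where G2: "ext G1 G2" "slp_size G2 \<le> slp_size G1 + 2"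
      "avail G2 h (p * w + p * w) (hj (p * w) (\<lambda>r c. f r (c mod w)) (\<lambda>r c. f r (c mod w)))" by blast
    have A2: "avail G2 h ((2 * p) * w) (\<lambda>r c. f r (c mod w))"
      by (rule avail_eqI[OF G2(3)]) (auto simp: hj_def mod_sub_mult)
    show ?thesis
    proof (cases "even q")
      case True
      then have "q = 2 * p" by (simp add: p_def)
      then show ?thesis using A2 G1 G2 ext_trans by (intro exI[of _ G2]) auto
    next
      case odd: False
      then have q: "q = 2 * p + 1" by (simp add: p_def)
      have A1: "avail G2 h w f" using avail_mono[OF A] G1 G2 ext_trans by blast
      from avail_hjoin[OF A2 A1] obtain G3 where G3: "ext G2 G3" "slp_size G3 \<le> slp_size G2 + 2"
        "avail G3 h (2 * p * w + w) (hj (2 * p * w) (\<lambda>r c. f r (c mod w)) f)" by blast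
      have "avail G3 h (q * w) (\<lambda>r c. f r (c mod w))"
      proof (rule avail_eqI[OF G3(3)])
        show "2 * p * w + w = q * w" using q by simp
        fix r c assume r: "c < 2 * p * w + w"
        show "hj (2 * p * w) (\<lambda>r c. f r (c mod w)) f r c = f r (c mod w)"
        proof (cases "c < 2 * p * w")
          case False
          then have "(c - 2 * p * w) mod w = c mod w" using mod_sub_mult[of "2*p" w c] by simp
          moreover have "(c - 2 * p * w) mod w = c - 2 * p * w" using r False by simp
          ultimately show ?thesis using False by (simp add: hj_def)
        qed (simp add: hj_def)
      qed simp
      then show ?thesis using G1 G2 G3 ext_trans by (intro exI[of _ G3]) auto
    qed
  qed
qed

lemma avail_const:
  assumes A: "avail G 1 1 (\<lambda>_ _. s)" and h: "h < 2 ^ k" and w: "w < 2 ^ k"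
  shows "\<exists>G'. ext G G' \<and> slp_size G' \<le> slp_size G + 8 * k \<and> avail G' h w (\<lambda>_ _. s)"
proof -
  from avail_hrep[OF A w] obtain G1 where G1: "ext G G1" "slp_size G1 \<le> slp_size G + 4 * k"
    "avail G1 1 (w * 1) (\<lambda>r c. s)" by blast
  from avail_vrep[OF G1(3) h] obtain G2 where G2: "ext G1 G2" "slp_size G2 \<le> slp_size G1 + 4 * k"
    "avail G2 (h * 1) (w * 1) (\<lambda>r c. s)" by blast
  show ?thesis using G1 G2 ext_trans by (intro exI[of _ G2]) (auto intro: avail_eqI[OF G2(3)])
qed



definition Fent :: "nat \<Rightarrow> nat \<Rightarrow> nat \<Rightarrow> sym" where
  "Fent k r c = (if c = k then Dollar else if (r div 2 ^ (k - 1 - c)) mod 2 = 1 then One else Zero)"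

lemma bit_sub: "e < k \<Longrightarrow> 2 ^ k \<le> (r::nat) \<Longrightarrow> (r - 2 ^ k) div 2 ^ e mod 2 = r div 2 ^ e mod 2"
proof -
  assume ek: "e < k" and r: "2 ^ k \<le> r"
  obtain s where s: "r = s + 2 ^ k" using r by (metis le_add_diff_inverse2)
  obtain d where d: "k = e + Suc d" using ek by (metis add_Suc_right less_imp_Suc_add)
  have rr: "r = s + (2 * 2 ^ d) * 2 ^ e"
    by (simp add: s d power_add)
  have "r div 2 ^ e = s div 2 ^ e + 2 * 2 ^ d"
    by (subst rr, subst div_mult_self1) simp_all
  then show ?thesis by (simp add: s)
qed

lemma Fent_step:
  assumes r: "r < 2 ^ Suc k" and c: "c < Suc k + 1"
  shows "vj (2 ^ k) (hj 1 (\<lambda>_ _. Zero) (Fent k)) (hj 1 (\<lambda>_ _. One) (Fent k)) r c = Fent (Suc k) r c"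
proof (cases "r < 2 ^ k")
  case True
  then have "r div 2 ^ k = 0" by simp
  then show ?thesis using True c
    by (cases c) (auto simp: vj_def hj_def Fent_def)
next
  case False
  then have r1: "r div 2 ^ k = 1" using r
  proof -
    have "r - 2 ^ k < 2 ^ k" using r False by simp
    then show ?thesis using False by (simp add: le_div_geq[of "2 ^ k" r] div_less)
  qed
  show ?thesis
  proof (cases c)
    case 0 then show ?thesis using False r1 by (simp add: vj_def hj_def Fent_def)
  next
    case (Suc c')
    have L: "vj (2 ^ k) (hj 1 (\<lambda>_ _. Zero) (Fent k)) (hj 1 (\<lambda>_ _. One) (Fent k)) r c = Fent k (r - 2 ^ k) c'"
      using False Suc by (simp add: vj_def hj_def)
    show ?thesis
    proof (cases "c' = k")
      case True then show ?thesis using L Suc by (simp add: Fent_def)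
    next
      case ne: False
      then have "c' < k" using c Suc by simp
      then have e: "k - 1 - c' < k" and e2: "Suc k - 1 - Suc c' = k - 1 - c'" by auto
      have "(r - 2 ^ k) div 2 ^ (k - 1 - c') mod 2 = r div 2 ^ (k - 1 - c') mod 2"
        using bit_sub[OF e] False by simp
      then show ?thesis using L Suc ne e2 by (simp add: Fent_def)
    qed
  qed
qed

lemma F_build:
  assumes z: "avail G 1 1 (\<lambda>_ _. Zero)" and o: "avail G 1 1 (\<lambda>_ _. One)" and d: "avail G 1 1 (\<lambda>_ _. Dollar)"
  shows "\<exists>G'. ext G G' \<and> slp_size G' \<le> slp_size G + 10 * k \<and>
     avail G' (2 ^ k) 1 (\<lambda>_ _. Zero) \<and> avail G' (2 ^ k) 1 (\<lambda>_ _. One) \<and> avail G' (2 ^ k) (k + 1) (Fent k)"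
proof (induction k)
  case 0
  have "avail G (2 ^ 0) (0 + 1) (Fent 0)" by (rule avail_eqI[OF d]) (auto simp: Fent_def)
  then show ?case using z o by (intro exI[of _ G]) auto
next
  case (Suc k)
  then obtain G1 where G1: "ext G G1" "slp_size G1 \<le> slp_size G + 10 * k"
     "avail G1 (2 ^ k) 1 (\<lambda>_ _. Zero)" "avail G1 (2 ^ k) 1 (\<lambda>_ _. One)" "avail G1 (2 ^ k) (k + 1) (Fent k)"
    by blast
  from avail_vjoin[OF G1(3) G1(3)] obtain G2 where G2: "ext G1 G2" "slp_size G2 \<le> slp_size G1 + 2"
    "avail G2 (2 ^ k + 2 ^ k) 1 (vj (2 ^ k) (\<lambda>_ _. Zero) (\<lambda>_ _. Zero))" by blast
  from avail_vjoin[OF avail_mono[OF G1(4) G2(1)] avail_mono[OF G1(4) G2(1)]] obtain G3 where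
    G3: "ext G2 G3" "slp_size G3 \<le> slp_size G2 + 2"
    "avail G3 (2 ^ k + 2 ^ k) 1 (vj (2 ^ k) (\<lambda>_ _. One) (\<lambda>_ _. One))" by blast
  have e13: "ext G1 G3" using G2 G3 ext_trans by blast
  from avail_hjoin[OF avail_mono[OF G1(3) e13] avail_mono[OF G1(5) e13]] obtain G4 where
    G4: "ext G3 G4" "slp_size G4 \<le> slp_size G3 + 2"
    "avail G4 (2 ^ k) (1 + (k + 1)) (hj 1 (\<lambda>_ _. Zero) (Fent k))" by blast
  have e14: "ext G1 G4" using e13 G4 ext_trans by blast
  from avail_hjoin[OF avail_mono[OF G1(4) e14] avail_mono[OF G1(5) e14]] obtain G5 where
    G5: "ext G4 G5" "slp_size G5 \<le> slp_size G4 + 2"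
    "avail G5 (2 ^ k) (1 + (k + 1)) (hj 1 (\<lambda>_ _. One) (Fent k))" by blast
  from avail_vjoin[OF avail_mono[OF G4(3) G5(1)] G5(3)] obtain G6 where
    G6: "ext G5 G6" "slp_size G6 \<le> slp_size G5 + 2"
    "avail G6 (2 ^ k + 2 ^ k) (1 + (k + 1)) (vj (2 ^ k) (hj 1 (\<lambda>_ _. Zero) (Fent k)) (hj 1 (\<lambda>_ _. One) (Fent k)))"
    by blast
  have e36: "ext G3 G6" using G4 G5 G6 ext_trans by blast
  have e26: "ext G2 G6" using G3 e36 ext_trans by blast
  have a1: "avail G6 (2 ^ Suc k) 1 (\<lambda>_ _. Zero)"
    by (rule avail_eqI[OF avail_mono[OF G2(3) e26]]) (auto simp: vj_def)
  have a2: "avail G6 (2 ^ Suc k) 1 (\<lambda>_ _. One)"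
    by (rule avail_eqI[OF avail_mono[OF G3(3) e36]]) (auto simp: vj_def)
  have a3: "avail G6 (2 ^ Suc k) (Suc k + 1) (Fent (Suc k))"
  proof (rule avail_eqI[OF G6(3)])
    fix r c :: nat assume "r < 2 ^ k + 2 ^ k" "c < 1 + (k + 1)"
    then show "vj (2 ^ k) (hj 1 (\<lambda>_ _. Zero) (Fent k)) (hj 1 (\<lambda>_ _. One) (Fent k)) r c = Fent (Suc k) r c"
      by (intro Fent_step) auto
  qed auto
  have "ext G G6" using G1 e14 G5 G6 ext_trans by blast
  moreover have "slp_size G6 \<le> slp_size G + 10 * Suc k"
    using G1(2) G2(2) G3(2) G4(2) G5(2) G6(2) by (simp only: mult_Suc_right)
  ultimately show ?case using a1 a2 a3 by (intro exI[of _ G6] conjI)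
qed

abbreviation S :: "nat \<Rightarrow> nat \<Rightarrow> nat \<Rightarrow> sym" where "S n \<equiv> shiftbin_entry n"

lemma T_step:
  assumes r: "r < 2 ^ Suc k + 2 ^ n - 1" and c: "c < 2 ^ Suc k * (n + 2)"
  shows "hj (2 ^ k * (n + 2)) (vj (2 ^ k + 2 ^ n - 1) (S n) (\<lambda>_ _. Zero)) (vj (2 ^ k) (\<lambda>_ _. Zero) (S n)) r c = S n r c"
proof (cases "c < 2 ^ k * (n + 2)")
  case True
  have "c div (n + 2) < 2 ^ k" using True by (simp add: div_less_iff_less_mult)
  then show ?thesis using True
    by (auto simp: hj_def vj_def shiftbin_entry_def Let_def)
next
  case False
  obtain c' where c': "c = c' + 2 ^ k * (n + 2)" using False by (metis add.commute le_add_diff_inverse not_le)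
  have cd: "c div (n + 2) = c' div (n + 2) + 2 ^ k" "c mod (n + 2) = c' mod (n + 2)"
    unfolding c' by (simp_all only: div_mult_self1 mod_mult_self1)
  show ?thesis
  proof (cases "r < 2 ^ k")
    case True
    then show ?thesis using False cd by (auto simp: hj_def vj_def shiftbin_entry_def Let_def)
  next
    case rF: False
    obtain s where s: "r = s + 2 ^ k" using rF by (metis add.commute le_add_diff_inverse not_le)
    have L: "hj (2 ^ k * (n + 2)) (vj (2 ^ k + 2 ^ n - 1) (S n) (\<lambda>_ _. Zero)) (vj (2 ^ k) (\<lambda>_ _. Zero) (S n)) r c
       = S n s c'" using False rF c' s by (simp add: hj_def vj_def)
    have R: "S n r c = S n s c'"
      unfolding shiftbin_entry_def Let_def cd s by simp
    show ?thesis using L R by simp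
  qed
qed

lemma T_build:
  assumes t0: "avail G (2 ^ 0 + 2 ^ n - 1) (2 ^ 0 * (n + 2)) (S n)" and z: "avail G (2 ^ 0) (2 ^ 0 * (n + 2)) (\<lambda>_ _. Zero)"
  shows "\<exists>G'. ext G G' \<and> slp_size G' \<le> slp_size G + 10 * k \<and>
     avail G' (2 ^ k + 2 ^ n - 1) (2 ^ k * (n + 2)) (S n) \<and> avail G' (2 ^ k) (2 ^ k * (n + 2)) (\<lambda>_ _. Zero)"
proof (induction k)
  case 0
  then show ?case using t0 z by (intro exI[of _ G]) auto
next
  case (Suc k)
  then obtain G1 where G1: "ext G G1" "slp_size G1 \<le> slp_size G + 10 * k"
     "avail G1 (2 ^ k + 2 ^ n - 1) (2 ^ k * (n + 2)) (S n)" "avail G1 (2 ^ k) (2 ^ k * (n + 2)) (\<lambda>_ _. Zero)"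
    by blast
  from avail_hjoin[OF G1(4) G1(4)] obtain G2 where G2: "ext G1 G2" "slp_size G2 \<le> slp_size G1 + 2"
    "avail G2 (2 ^ k) (2 ^ k * (n + 2) + 2 ^ k * (n + 2)) (hj (2 ^ k * (n + 2)) (\<lambda>_ _. Zero) (\<lambda>_ _. Zero))" by blast
  from avail_vjoin[OF G2(3) G2(3)] obtain G3 where G3: "ext G2 G3" "slp_size G3 \<le> slp_size G2 + 2"
    "avail G3 (2 ^ k + 2 ^ k) (2 ^ k * (n + 2) + 2 ^ k * (n + 2)) (vj (2 ^ k) (hj (2 ^ k * (n + 2)) (\<lambda>_ _. Zero) (\<lambda>_ _. Zero)) (hj (2 ^ k * (n + 2)) (\<lambda>_ _. Zero) (\<lambda>_ _. Zero)))" by blast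
  have e13: "ext G1 G3" using G2 G3 ext_trans by blast
  from avail_vjoin[OF avail_mono[OF G1(3) e13] avail_mono[OF G1(4) e13]] obtain G4 where
    G4: "ext G3 G4" "slp_size G4 \<le> slp_size G3 + 2"
    "avail G4 (2 ^ k + 2 ^ n - 1 + 2 ^ k) (2 ^ k * (n + 2)) (vj (2 ^ k + 2 ^ n - 1) (S n) (\<lambda>_ _. Zero))" by blast
  have e14: "ext G1 G4" using e13 G4 ext_trans by blast
  from avail_vjoin[OF avail_mono[OF G1(4) e14] avail_mono[OF G1(3) e14]] obtain G5 where
    G5: "ext G4 G5" "slp_size G5 \<le> slp_size G4 + 2"
    "avail G5 (2 ^ k + (2 ^ k + 2 ^ n - 1)) (2 ^ k * (n + 2)) (vj (2 ^ k) (\<lambda>_ _. Zero) (S n))" by blast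
  have G5': "avail G5 (2 ^ k + 2 ^ n - 1 + 2 ^ k) (2 ^ k * (n + 2)) (vj (2 ^ k) (\<lambda>_ _. Zero) (S n))"
    by (rule avail_eqI[OF G5(3)]) auto
  from avail_hjoin[OF avail_mono[OF G4(3) G5(1)] G5'] obtain G6 where
    G6: "ext G5 G6" "slp_size G6 \<le> slp_size G5 + 2"
    "avail G6 (2 ^ k + 2 ^ n - 1 + 2 ^ k) (2 ^ k * (n + 2) + 2 ^ k * (n + 2))
       (hj (2 ^ k * (n + 2)) (vj (2 ^ k + 2 ^ n - 1) (S n) (\<lambda>_ _. Zero)) (vj (2 ^ k) (\<lambda>_ _. Zero) (S n)))" by blast
  have e36: "ext G3 G6" using G4 G5 G6 ext_trans by blast
  have a1: "avail G6 (2 ^ Suc k) (2 ^ Suc k * (n + 2)) (\<lambda>_ _. Zero)"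
    by (rule avail_eqI[OF avail_mono[OF G3(3) e36]]) (auto simp: vj_def hj_def)
  have p: "(1::nat) \<le> 2 ^ n" by simp
  have a2: "avail G6 (2 ^ Suc k + 2 ^ n - 1) (2 ^ Suc k * (n + 2)) (S n)"
  proof (rule avail_eqI[OF G6(3)])
    show "(2::nat) ^ k + 2 ^ n - 1 + 2 ^ k = 2 ^ Suc k + 2 ^ n - 1" using p by simp
    show "2 ^ k * (n + 2) + 2 ^ k * (n + 2) = 2 ^ Suc k * (n + 2)" by simp
    fix r c :: nat assume "r < 2 ^ k + 2 ^ n - 1 + 2 ^ k" "c < 2 ^ k * (n + 2) + 2 ^ k * (n + 2)"
    then show "hj (2 ^ k * (n + 2)) (vj (2 ^ k + 2 ^ n - 1) (S n) (\<lambda>_ _. Zero)) (vj (2 ^ k) (\<lambda>_ _. Zero) (S n)) r c = S n r c"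
      using p by (intro T_step) auto
  qed
  have "ext G G6" using G1 e13 e36 ext_trans by blast
  moreover have "slp_size G6 \<le> slp_size G + 10 * Suc k"
    using G1(2) G2(2) G3(2) G4(2) G5(2) G6(2) by (simp only: mult_Suc_right)
  ultimately show ?case using a1 a2 by (intro exI[of _ G6] conjI)
qed


lemma Bin_ent: "r < 2 ^ n \<Longrightarrow> c < n + 2 \<Longrightarrow> hj 1 (\<lambda>_ _. Dollar) (Fent n) r c = S n r c"
proof (cases c)
  case 0
  assume "r < 2 ^ n"
  then show ?thesis using 0 by (simp add: hj_def Fent_def shiftbin_entry_def bin_entry_def Let_def)
next
  case (Suc c')
  assume r: "r < 2 ^ n" and c: "c < n + 2"
  have d: "Suc c' div (n + 2) = 0" "Suc c' mod (n + 2) = Suc c'" using c Suc by simp_all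
  have e: "n - 1 - c' = n - Suc c'" by simp
  show ?thesis using r unfolding Suc hj_def Fent_def shiftbin_entry_def bin_entry_def Let_def d e by simp
qed

lemma B_ent: "r < 2 * 2 ^ n \<Longrightarrow> c < 2 ^ n * (n + 2) \<Longrightarrow> vj (2 ^ n + 2 ^ n - 1) (S n) (\<lambda>_ _. Zero) r c = S n r c"
proof -
  assume r: "r < 2 * 2 ^ n" and c: "c < 2 ^ n * (n + 2)"
  have j: "c div (n + 2) < 2 ^ n" using c by (simp add: div_less_iff_less_mult)
  show ?thesis
  proof (cases "r < 2 ^ n + 2 ^ n - 1")
    case True then show ?thesis by (simp add: vj_def)
  next
    case False
    then have "r = 2 ^ n + 2 ^ n - 1" using r by simp
    then have "\<not> r < c div (n + 2) + 2 ^ n" using j by simp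
    then show ?thesis using False by (simp add: vj_def shiftbin_entry_def Let_def)
  qed
qed

lemma C_ent:
  assumes nd: "n = Mexp M" and m: "m = 2 ^ n" and W: "W = m * (n + 2)"
    and q1: "q1 = N div (2 * m)" and q2: "q2 = (N - m) div (2 * m)"
  shows "hj (W + W) (hj W (vj (q1 * (2 * m)) (\<lambda>r c. S n (r mod (2 * m)) c) (\<lambda>_ _. Zero))
            (vj (m + q2 * (2 * m)) (vj m (\<lambda>_ _. Zero) (\<lambda>r c. S n (r mod (2 * m)) c)) (\<lambda>_ _. Zero)))
          (\<lambda>_ _. Zero) r c = C_entry N M r c"
proof -
  have CE: "C_entry N M r c = (if c < W then
        (if r < q1 * (2 * m) then S n (r mod (2 * m)) c else Zero)
      else if c < 2 * W then
        (if m \<le> r \<and> r < m + q2 * (2 * m)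
         then S n ((r - m) mod (2 * m)) (c - W) else Zero)
      else Zero)"
    unfolding C_entry_def Let_def nd[symmetric] m[symmetric] W[symmetric] q1[symmetric] q2[symmetric] ..
  show ?thesis
  proof (cases "c < W")
    case True then show ?thesis unfolding CE by (simp add: hj_def vj_def)
  next
    case F1: False
    show ?thesis
    proof (cases "c < 2 * W")
      case True then show ?thesis using F1 unfolding CE by (simp add: hj_def vj_def)
    next
      case False then show ?thesis using F1 unfolding CE by (simp add: hj_def vj_def)
    qed
  qed
qed

lemma Mexp_prop: "4 \<le> M \<Longrightarrow> 2 * 2 ^ Mexp M * (Mexp M + 2) \<le> M"
  unfolding Mexp_def
proof (rule GreatestI_nat[where k = 0 and b = M])
  assume "4 \<le> M" then show "2 * 2 ^ 0 * (0 + 2) \<le> M" by simp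
next
  fix y assume h: "2 * 2 ^ y * (y + 2) \<le> (M::nat)"
  have a: "2 * 2 ^ y * (y + 2) = (2::nat) ^ y * (2 * y + 4)" by (simp add: algebra_simps)
  have b: "(2::nat) ^ y * 1 \<le> 2 ^ y * (2 * y + 4)" by (rule mult_le_mono2) simp
  have "y < 2 ^ y" by (rule less_exp)
  then show "y \<le> M" using h a b by linarith
qed

lemma main_build:
  assumes N1: "1 \<le> N" and M4: "4 \<le> M" and mN: "Mpow M \<le> N"
  shows "\<exists>G. avail G N M (C_entry N M) \<and> slp_size G \<le> 100 * (floorlog 2 N + floorlog 2 M) + 20"
proof -
  define K where "K = floorlog 2 N + floorlog 2 M"
  define n where "n = Mexp M"
  define m where "m = (2::nat) ^ n"
  define W where "W = m * (n + 2)"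
  define q1 where "q1 = N div (2 * m)"
  define q2 where "q2 = (N - m) div (2 * m)"
  define r1 where "r1 = N - q1 * (2 * m)"
  define r2 where "r2 = N - m - q2 * (2 * m)"
  have hM: "2 * W \<le> M" using Mexp_prop[OF M4] by (simp add: W_def m_def n_def)
  have hN: "m \<le> N" using mN by (simp add: Mpow_def m_def n_def)
  have m1: "1 \<le> m" by (simp add: m_def)
  have NK: "N < 2 ^ K"
  proof -
    have "N < 2 ^ floorlog 2 N" using floorlog_bounds[of N 2] N1 by simp
    also have "\<dots> \<le> 2 ^ K" by (simp add: K_def)
    finally show ?thesis .
  qed
  have MK: "M < 2 ^ K"
  proof -
    have "M < 2 ^ floorlog 2 M" using floorlog_bounds[of M 2] M4 by simp
    also have "\<dots> \<le> 2 ^ K" by (simp add: K_def)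
    finally show ?thesis .
  qed
  have ltN: "x \<le> N \<Longrightarrow> x < 2 ^ K" for x using NK by linarith
  have ltM: "x \<le> M \<Longrightarrow> x < 2 ^ K" for x using MK by linarith
  have WM: "W \<le> M" using hM by linarith
  have nW: "n + 2 \<le> W" using mult_le_mono1[OF m1, of "n + 2"] unfolding W_def by simp
  have mW: "m \<le> W" unfolding W_def by simp
  have mM: "m \<le> M" using mW WM by linarith
  have nK: "n \<le> K"
  proof -
    have "n < 2 ^ n" by (rule less_exp)
    have "2 ^ n < (2::nat) ^ K" using ltM[OF mM] by (simp add: m_def)
    then show ?thesis using power_less_imp_less_exp[of 2 n K] by simp
  qed
  have hq1: "q1 * (2 * m) \<le> N" unfolding q1_def by (rule div_times_less_eq_dividend)
  have hq2': "q2 * (2 * m) \<le> N - m" unfolding q2_def by (rule div_times_less_eq_dividend)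
  have hq2: "m + q2 * (2 * m) \<le> N" using hq2' hN by linarith
  have hr1: "q1 * (2 * m) + r1 = N" using hq1 by (simp add: r1_def)
  have hr2: "m + q2 * (2 * m) + r2 = N" using hq2 by (simp add: r2_def)
  have q1N: "q1 \<le> N" unfolding q1_def by (rule div_le_dividend)
  have q2N: "q2 \<le> N" unfolding q2_def using div_le_dividend[of "N - m" "2 * m"] by linarith
  have r1N: "r1 \<le> N" unfolding r1_def by simp
  have r2N: "r2 \<le> N" unfolding r2_def by simp
  have oneK: "1 < (2::nat) ^ K" using ltN[OF N1] .
  have size0: "slp_size [] = 0" by (simp add: slp_size_def)

  obtain G1 where G1: "ext [] G1" "slp_size G1 \<le> slp_size [] + 1" "avail G1 1 1 (\<lambda>_ _. Zero)"
    using avail_term by blast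
  obtain G2 where G2: "ext G1 G2" "slp_size G2 \<le> slp_size G1 + 1" "avail G2 1 1 (\<lambda>_ _. One)"
    using avail_term by blast
  obtain G3 where G3: "ext G2 G3" "slp_size G3 \<le> slp_size G2 + 1" "avail G3 1 1 (\<lambda>_ _. Dollar)"
    using avail_term by blast
  have z3: "avail G3 1 1 (\<lambda>_ _. Zero)" using avail_mono[OF G1(3) ext_trans[OF G2(1) G3(1)]] .
  have o3: "avail G3 1 1 (\<lambda>_ _. One)" using avail_mono[OF G2(3) G3(1)] .
  obtain G4 where G4: "ext G3 G4" "slp_size G4 \<le> slp_size G3 + 10 * n"
     "avail G4 (2 ^ n) (n + 1) (Fent n)"
    using F_build[OF z3 o3 G3(3), of n] by blast
  obtain G5 where G5: "ext G4 G5" "slp_size G5 \<le> slp_size G4 + 4 * K"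
     "avail G5 (m * 1) 1 (\<lambda>r c. Dollar)"
    using avail_vrep[OF avail_mono[OF G3(3) G4(1)] ltM[OF mM]] by blast
  have dc: "avail G5 (2 ^ n) 1 (\<lambda>_ _. Dollar)" by (rule avail_eqI[OF G5(3)]) (simp_all add: m_def)
  obtain G6 where G6: "ext G5 G6" "slp_size G6 \<le> slp_size G5 + 2"
     "avail G6 (2 ^ n) (1 + (n + 1)) (hj 1 (\<lambda>_ _. Dollar) (Fent n))"
    using avail_hjoin[OF dc avail_mono[OF G4(3) G5(1)]] by blast
  have T0: "avail G6 (2 ^ 0 + 2 ^ n - 1) (2 ^ 0 * (n + 2)) (S n)"
  proof (rule avail_eqI[OF G6(3)])
    fix r c :: nat assume "r < 2 ^ n" "c < 1 + (n + 1)"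
    then show "hj 1 (\<lambda>_ _. Dollar) (Fent n) r c = S n r c" by (intro Bin_ent) simp_all
  qed simp_all
  have e36: "ext G3 G6" using ext_trans[OF G4(1) ext_trans[OF G5(1) G6(1)]] .
  have z6: "avail G6 1 1 (\<lambda>_ _. Zero)" using avail_mono[OF z3 e36] .
  obtain G7 where G7: "ext G6 G7" "slp_size G7 \<le> slp_size G6 + 8 * K"
     "avail G7 1 (n + 2) (\<lambda>_ _. Zero)"
    using avail_const[OF z6 oneK ltM] nW WM by (meson le_trans)
  have Z0: "avail G7 (2 ^ 0) (2 ^ 0 * (n + 2)) (\<lambda>_ _. Zero)" by (rule avail_eqI[OF G7(3)]) simp_all
  obtain G8 where G8: "ext G7 G8" "slp_size G8 \<le> slp_size G7 + 10 * n"
     "avail G8 (2 ^ n + 2 ^ n - 1) (2 ^ n * (n + 2)) (S n)"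
    using T_build[OF avail_mono[OF T0 G7(1)] Z0, of n] by blast
  have z8: "avail G8 1 1 (\<lambda>_ _. Zero)" using avail_mono[OF z6 ext_trans[OF G7(1) G8(1)]] .
  obtain G9 where G9: "ext G8 G9" "slp_size G9 \<le> slp_size G8 + 8 * K"
     "avail G9 1 W (\<lambda>_ _. Zero)"
    using avail_const[OF z8 oneK ltM[OF WM]] by blast
  have z9: "avail G9 1 (2 ^ n * (n + 2)) (\<lambda>_ _. Zero)"
    by (rule avail_eqI[OF G9(3)]) (simp_all add: W_def m_def)
  obtain G10 where G10: "ext G9 G10" "slp_size G10 \<le> slp_size G9 + 2"
     "avail G10 (2 ^ n + 2 ^ n - 1 + 1) (2 ^ n * (n + 2)) (vj (2 ^ n + 2 ^ n - 1) (S n) (\<lambda>_ _. Zero))"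
    using avail_vjoin[OF avail_mono[OF G8(3) G9(1)] z9] by blast
  have B: "avail G10 (2 * m) W (S n)"
  proof (rule avail_eqI[OF G10(3)])
    show "2 ^ n + 2 ^ n - 1 + 1 = 2 * m" by (simp add: m_def)
    show "2 ^ n * (n + 2) = W" by (simp add: m_def W_def)
    fix r c :: nat assume "r < 2 ^ n + 2 ^ n - 1 + 1" "c < 2 ^ n * (n + 2)"
    then show "vj (2 ^ n + 2 ^ n - 1) (S n) (\<lambda>_ _. Zero) r c = S n r c" by (intro B_ent) simp_all
  qed
  have z10: "avail G10 1 1 (\<lambda>_ _. Zero)" using avail_mono[OF z8 ext_trans[OF G9(1) G10(1)]] .
  obtain G11 where G11: "ext G10 G11" "slp_size G11 \<le> slp_size G10 + 4 * K"
     "avail G11 (q1 * (2 * m)) W (\<lambda>r c. S n (r mod (2 * m)) c)"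
    using avail_vrep[OF B ltN[OF q1N]] by blast
  have z11: "avail G11 1 1 (\<lambda>_ _. Zero)" using avail_mono[OF z10 G11(1)] .
  obtain G12 where G12: "ext G11 G12" "slp_size G12 \<le> slp_size G11 + 8 * K"
     "avail G12 r1 W (\<lambda>_ _. Zero)"
    using avail_const[OF z11 ltN[OF r1N] ltM[OF WM]] by blast
  obtain G13 where G13: "ext G12 G13" "slp_size G13 \<le> slp_size G12 + 2"
     "avail G13 (q1 * (2 * m) + r1) W (vj (q1 * (2 * m)) (\<lambda>r c. S n (r mod (2 * m)) c) (\<lambda>_ _. Zero))"
    using avail_vjoin[OF avail_mono[OF G11(3) G12(1)] G12(3)] by blast
  have e1113: "ext G11 G13" using ext_trans[OF G12(1) G13(1)] .
  have z13: "avail G13 1 1 (\<lambda>_ _. Zero)" using avail_mono[OF z11 e1113] .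
  obtain G14 where G14: "ext G13 G14" "slp_size G14 \<le> slp_size G13 + 8 * K"
     "avail G14 m W (\<lambda>_ _. Zero)"
    using avail_const[OF z13 ltN[OF hN] ltM[OF WM]] by blast
  have e1014: "ext G10 G14" using ext_trans[OF G11(1) ext_trans[OF e1113 G14(1)]] .
  obtain G15 where G15: "ext G14 G15" "slp_size G15 \<le> slp_size G14 + 4 * K"
     "avail G15 (q2 * (2 * m)) W (\<lambda>r c. S n (r mod (2 * m)) c)"
    using avail_vrep[OF avail_mono[OF B e1014] ltN[OF q2N]] by blast
  have z15: "avail G15 1 1 (\<lambda>_ _. Zero)" using avail_mono[OF z13 ext_trans[OF G14(1) G15(1)]] .
  obtain G16 where G16: "ext G15 G16" "slp_size G16 \<le> slp_size G15 + 8 * K"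
     "avail G16 r2 W (\<lambda>_ _. Zero)"
    using avail_const[OF z15 ltN[OF r2N] ltM[OF WM]] by blast
  obtain G17 where G17: "ext G16 G17" "slp_size G17 \<le> slp_size G16 + 2"
     "avail G17 (m + q2 * (2 * m)) W (vj m (\<lambda>_ _. Zero) (\<lambda>r c. S n (r mod (2 * m)) c))"
    using avail_vjoin[OF avail_mono[OF G14(3) ext_trans[OF G15(1) G16(1)]] avail_mono[OF G15(3) G16(1)]] by blast
  obtain G18 where G18: "ext G17 G18" "slp_size G18 \<le> slp_size G17 + 2"
     "avail G18 (m + q2 * (2 * m) + r2) W
        (vj (m + q2 * (2 * m)) (vj m (\<lambda>_ _. Zero) (\<lambda>r c. S n (r mod (2 * m)) c)) (\<lambda>_ _. Zero))"
    using avail_vjoin[OF G17(3) avail_mono[OF G16(3) G17(1)]] by blast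
  have e1518: "ext G15 G18" using ext_trans[OF G16(1) ext_trans[OF G17(1) G18(1)]] .
  have z18: "avail G18 1 1 (\<lambda>_ _. Zero)" using avail_mono[OF z15 e1518] .
  obtain G19 where G19: "ext G18 G19" "slp_size G19 \<le> slp_size G18 + 8 * K"
     "avail G19 N (M - 2 * W) (\<lambda>_ _. Zero)"
    using avail_const[OF z18 NK ltM[of "M - 2 * W"]] by auto
  have e1319: "ext G13 G19" using ext_trans[OF G14(1) ext_trans[OF G15(1) ext_trans[OF e1518 G19(1)]]] .
  have L: "avail G19 N W (vj (q1 * (2 * m)) (\<lambda>r c. S n (r mod (2 * m)) c) (\<lambda>_ _. Zero))"
    by (rule avail_eqI[OF avail_mono[OF G13(3) e1319]]) (simp_all add: hr1)
  have R: "avail G19 N W (vj (m + q2 * (2 * m)) (vj m (\<lambda>_ _. Zero) (\<lambda>r c. S n (r mod (2 * m)) c)) (\<lambda>_ _. Zero))"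
    by (rule avail_eqI[OF avail_mono[OF G18(3) G19(1)]]) (simp_all add: hr2)
  obtain G20 where G20: "ext G19 G20" "slp_size G20 \<le> slp_size G19 + 2"
     "avail G20 N (W + W) (hj W (vj (q1 * (2 * m)) (\<lambda>r c. S n (r mod (2 * m)) c) (\<lambda>_ _. Zero))
        (vj (m + q2 * (2 * m)) (vj m (\<lambda>_ _. Zero) (\<lambda>r c. S n (r mod (2 * m)) c)) (\<lambda>_ _. Zero)))"
    using avail_hjoin[OF L R] by blast
  obtain G21 where G21: "ext G20 G21" "slp_size G21 \<le> slp_size G20 + 2"
     "avail G21 N (W + W + (M - 2 * W)) (hj (W + W) (hj W (vj (q1 * (2 * m)) (\<lambda>r c. S n (r mod (2 * m)) c) (\<lambda>_ _. Zero))
        (vj (m + q2 * (2 * m)) (vj m (\<lambda>_ _. Zero) (\<lambda>r c. S n (r mod (2 * m)) c)) (\<lambda>_ _. Zero))) (\<lambda>_ _. Zero))"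
    using avail_hjoin[OF G20(3) avail_mono[OF G19(3) G20(1)]] by blast
  have final: "avail G21 N M (C_entry N M)"
  proof (rule avail_eqI[OF G21(3)])
    show "W + W + (M - 2 * W) = M" using hM by simp
    fix r c :: nat
    show "hj (W + W) (hj W (vj (q1 * (2 * m)) (\<lambda>r c. S n (r mod (2 * m)) c) (\<lambda>_ _. Zero))
        (vj (m + q2 * (2 * m)) (vj m (\<lambda>_ _. Zero) (\<lambda>r c. S n (r mod (2 * m)) c)) (\<lambda>_ _. Zero))) (\<lambda>_ _. Zero) r c
      = C_entry N M r c"
      by (rule C_ent[OF n_def m_def W_def q1_def q2_def])
  qed simp
  have sz: "slp_size G21 \<le> 17 + 20 * n + 72 * K"
    using size0 G1(2) G2(2) G3(2) G4(2) G5(2) G6(2) G7(2) G8(2) G9(2) G10(2) G11(2) G12(2) G13(2)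
      G14(2) G15(2) G16(2) G17(2) G18(2) G19(2) G20(2) G21(2) by linarith
  have "slp_size G21 \<le> 100 * K + 20"
    using sz nK by linarith
  then have "slp_size G21 \<le> 100 * (floorlog 2 N + floorlog 2 M) + 20"
    by (simp only: K_def)
  then show ?thesis using final by blast
qed

lemma fl_bound: "1 \<le> x \<Longrightarrow> real (floorlog 2 x) \<le> log 2 (real x) + 1"
proof -
  assume x: "1 \<le> x"
  have l0: "0 \<le> log 2 (real x)" using x by simp
  have "floorlog 2 x = nat \<lfloor>log 2 (real x)\<rfloor> + 1" using x by (simp add: floorlog_def)
  moreover have "real (nat \<lfloor>log 2 (real x)\<rfloor>) \<le> log 2 (real x)"
    using l0 by (simp add: of_nat_nat)
  ultimately show ?thesis by simp
qed

theorem mainTheorem8: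
  shows "\<exists>c::real. c > 0 \<and>
           (\<forall>N M. C_defined N M \<longrightarrow>
              (\<exists>G s. slp_derives G s (C_str N M) \<and>
                     real (slp_size G) \<le> c * (log 2 (real N) + log 2 (real M))))"
proof (intro exI[of _ 210] conjI allI impI)
  fix N M assume D: "C_defined N M"
  then have N1: "1 \<le> N" and M4: "4 \<le> M" and mN: "Mpow M \<le> N" by (auto simp: C_defined_def)
  obtain G where G: "avail G N M (C_entry N M)" "slp_size G \<le> 100 * (floorlog 2 N + floorlog 2 M) + 20"
    using main_build[OF N1 M4 mN] by blast
  obtain i where i: "i < length G" "slp_eval G i = Some (mk N M (C_entry N M))"
    using G(1) N1 M4 unfolding avail_def by auto
  have eq: "mk N M (C_entry N M) = C_str N M" by (simp add: mk_def C_str_def)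
  have der: "slp_derives G i (C_str N M)" using i eq by (simp add: slp_derives_def)
  have a: "real (floorlog 2 N) \<le> log 2 (real N) + 1" using fl_bound[OF N1] .
  have b: "real (floorlog 2 M) \<le> log 2 (real M) + 1" using fl_bound M4 by simp
  have lN: "0 \<le> log 2 (real N)" using N1 by simp
  have l4: "log 2 (4::real) = 2"
  proof -
    have "log 2 ((2::real) ^ 2) = 2" by (subst log_pow_cancel) simp_all
    then show ?thesis by simp
  qed
  have lM: "2 \<le> log 2 (real M)"
  proof -
    have "log 2 (4::real) \<le> log 2 (real M)" using M4 by simp
    then show ?thesis using l4 by simp
  qed
  have s: "real (slp_size G) \<le> 100 * (real (floorlog 2 N) + real (floorlog 2 M)) + 20"
    using G(2) by (simp add: of_nat_mono)
  have "real (slp_size G) \<le> 210 * (log 2 (real N) + log 2 (real M))"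
  proof -
    have "real (slp_size G) \<le> 100 * real (floorlog 2 N) + 100 * real (floorlog 2 M) + 20"
      using s by (simp add: distrib_left)
    also have "\<dots> \<le> 100 * (log 2 (real N) + 1) + 100 * (log 2 (real M) + 1) + 20"
      using add_mono[OF mult_left_mono[OF a, of 100] mult_left_mono[OF b, of 100]] by simp
    also have "\<dots> \<le> 210 * (log 2 (real N) + log 2 (real M))"
      using lN lM by (simp add: distrib_left)
    finally show ?thesis .
  qed
  then show "\<exists>G s. slp_derives G s (C_str N M) \<and> real (slp_size G) \<le> 210 * (log 2 (real N) + log 2 (real M))"
    using der by blast
qed simp

end
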